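(* Let $G$ be a classical algebraic group over an algebraically closed field $k$ with natural module $V$ of dimension $n$. Let $C_1,\dots,C_e$ be conjugacy classes of $G$, $\Omega=C_1\times\dots\times C_e$, and let $\gamma_i$ be the dimension of the largest eigenspace on $V$ of an element of $C_i$. If $\sum_{i=1}^e\gamma_i>n(e-1)$, then no tuple $(x_1,\dots,x_e)\in\Omega$ generates a Zariski dense subgroup of $G$. *)

theory Defs
  imports "HOL-Computational_Algebra.Polynomial" "Jordan_Normal_Form.Matrix_Kernel"
    "Jordan_Normal_Form.Char_Poly"
begin

(* n x n matrices over k represent endomorphisms of the natural module V = k^n *)

definition symp_form :: "nat \<Rightarrow> 'a::field vec \<Rightarrow> 'a vec \<Rightarrow> 'a" where
  "symp_form n x y = (\<Sum>i<n div 2. x $ i * y $ (n - 1 - i) - x $ (n - 1 - i) * y $ i)"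

definition quad_form :: "nat \<Rightarrow> 'a::field vec \<Rightarrow> 'a" where
  "quad_form n x = (\<Sum>i<n div 2. x $ i * x $ (n - 1 - i))
      + (if odd n then x $ (n div 2) * x $ (n div 2) else 0)"

datatype classical_type = Linear | Symplectic | Orthogonal

(* rank of (1 - A), used for the Dickson invariant in characteristic 2 *)
definition rank_one_minus :: "nat \<Rightarrow> 'a::field mat \<Rightarrow> nat" where
  "rank_one_minus n A = n - kernel_dim (1\<^sub>m n - A)"

definition classical_group :: "classical_type \<Rightarrow> nat \<Rightarrow> 'a::field mat set" where
  "classical_group t n = (case t of
      Linear \<Rightarrow> {A \<in> carrier_mat n n. det A = 1}
    | Symplectic \<Rightarrow> {A \<in> carrier_mat n n. det A = 1 \<and>
         (\<forall>x \<in> carrier_vec n. \<forall>y \<in> carrier_vec n. symp_form n (A *\<^sub>v x) (A *\<^sub>v y) = symp_form n x y)}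
    | Orthogonal \<Rightarrow> {A \<in> carrier_mat n n.
         (\<forall>x \<in> carrier_vec n. quad_form n (A *\<^sub>v x) = quad_form n x) \<and>
         (if (2::'a) \<noteq> 0 then det A = 1 else even (rank_one_minus n A))})"

(* the data (type, n) for which the classical group is a genuine classical
   algebraic group SL_n, Sp_n, SO_n acting on its natural module *)
definition classical_data :: "classical_type \<Rightarrow> nat \<Rightarrow> 'a::field itself \<Rightarrow> bool" where
  "classical_data t n _ = (case t of
      Linear \<Rightarrow> n \<ge> 2
    | Symplectic \<Rightarrow> n \<ge> 2 \<and> even n
    | Orthogonal \<Rightarrow> n \<ge> 3 \<and> (odd n \<longrightarrow> (2::'a) \<noteq> 0))"

definition conj_class :: "nat \<Rightarrow> 'a::field mat set \<Rightarrow> 'a mat \<Rightarrow> 'a mat set" where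
  "conj_class n G g = {B. \<exists>h\<in>G. \<exists>h'\<in>G. h * h' = 1\<^sub>m n \<and> B = h * g * h'}"

definition eigenspace_dim :: "'a::field mat \<Rightarrow> 'a \<Rightarrow> nat" where
  "eigenspace_dim A lam = kernel_dim (char_matrix A lam)"

definition max_eigenspace_dim :: "'a::field mat \<Rightarrow> nat" where
  "max_eigenspace_dim A = Max {eigenspace_dim A lam | lam. eigenvalue A lam}"

(* polynomial functions in the matrix entries (coordinate ring of M_n(k)) *)
inductive_set mat_poly_fun :: "nat \<Rightarrow> ('a::field mat \<Rightarrow> 'a) set" for n where
  const: "(\<lambda>A. c) \<in> mat_poly_fun n"
| entry: "i < n \<Longrightarrow> j < n \<Longrightarrow> (\<lambda>A. A $$ (i, j)) \<in> mat_poly_fun n"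
| add: "f \<in> mat_poly_fun n \<Longrightarrow> g \<in> mat_poly_fun n \<Longrightarrow> (\<lambda>A. f A + g A) \<in> mat_poly_fun n"
| mult: "f \<in> mat_poly_fun n \<Longrightarrow> g \<in> mat_poly_fun n \<Longrightarrow> (\<lambda>A. f A * g A) \<in> mat_poly_fun n"

definition zariski_dense_in :: "nat \<Rightarrow> 'a::field mat set \<Rightarrow> 'a mat set \<Rightarrow> bool" where
  "zariski_dense_in n H G = (H \<subseteq> G \<and>
     (\<forall>f \<in> mat_poly_fun n. (\<forall>A \<in> H. f A = 0) \<longrightarrow> (\<forall>A \<in> G. f A = 0)))"

inductive_set gen_subgroup :: "nat \<Rightarrow> 'a::field mat set \<Rightarrow> 'a mat set" for n X where
  one: "1\<^sub>m n \<in> gen_subgroup n X"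
| gen: "A \<in> X \<Longrightarrow> A \<in> gen_subgroup n X"
| mult: "A \<in> gen_subgroup n X \<Longrightarrow> B \<in> gen_subgroup n X \<Longrightarrow> A * B \<in> gen_subgroup n X"
| inv: "A \<in> gen_subgroup n X \<Longrightarrow> B \<in> carrier_mat n n \<Longrightarrow> A * B = 1\<^sub>m n
          \<Longrightarrow> B \<in> gen_subgroup n X"

end

theory Submission
  imports Defs
begin

lemma reduce_rows:
  fixes C :: "'a::field mat"
  assumes C: "C \<in> carrier_mat n n"
  shows "\<exists>Ls. set Ls \<subseteq> carrier_vec n \<and> length Ls = n - kernel_dim C \<and>
     (\<forall>x\<in>carrier_vec n. (\<forall>r\<in>set Ls. r \<bullet> x = 0) \<longrightarrow> C *\<^sub>v x = 0\<^sub>v n)"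
proof -
  define R where "R = gauss_jordan_single C"
  note gj = gauss_jordan_single[OF C R_def[symmetric]]
  from gj(4) obtain P Q where RP: "R = P * C" and P: "P \<in> carrier_mat n n"
    and Q: "Q \<in> carrier_mat n n" and QP: "Q * P = 1\<^sub>m n" by blast
  have R: "R \<in> carrier_mat n n" using gj(2) .
  interpret K: kernel n n R by (unfold_locales, rule R)
  have mk: "mat_kernel C = mat_kernel R" using mat_kernel_mult_eq[OF C P Q QP] RP by simp
  have "kernel_dim C = K.dim" unfolding kernel_dim_def using C mk by simp
  also have "\<dots> = n - card {i. i < n \<and> row R i \<noteq> 0\<^sub>v n}"
    using find_base_vectors[OF gj(3) R] by auto
  finally have kd: "kernel_dim C = n - card {i. i < n \<and> row R i \<noteq> 0\<^sub>v n}" .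
  define Ls where "Ls = map (row R) (filter (\<lambda>i. row R i \<noteq> 0\<^sub>v n) [0..<n])"
  have "length Ls = card {i. i < n \<and> row R i \<noteq> 0\<^sub>v n}"
    unfolding Ls_def length_map length_filter_conv_card by (intro arg_cong[where f=card]) auto
  moreover have "card {i. i < n \<and> row R i \<noteq> 0\<^sub>v n} \<le> n"
    by (rule order.trans[OF card_mono[of "{..<n}"]]) auto
  ultimately have len: "length Ls = n - kernel_dim C" using kd by simp
  have car: "set Ls \<subseteq> carrier_vec n" unfolding Ls_def using R by auto
  have main: "C *\<^sub>v x = 0\<^sub>v n" if x: "x \<in> carrier_vec n" and z: "\<forall>r\<in>set Ls. r \<bullet> x = 0" for x
  proof -
    have "R *\<^sub>v x = 0\<^sub>v n"
    proof (rule eq_vecI)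
      fix i assume i: "i < dim_vec (0\<^sub>v n :: 'a vec)"
      hence i: "i < n" by simp
      show "(R *\<^sub>v x) $ i = 0\<^sub>v n $ i"
      proof (cases "row R i = 0\<^sub>v n")
        case True
        then show ?thesis using i R x by simp
      next
        case False
        hence "row R i \<in> set Ls" unfolding Ls_def using i by auto
        then show ?thesis using z i R by simp
      qed
    qed (insert R, auto)
    thus ?thesis using gj(1)[OF x] by simp
  qed
  show ?thesis using car len main by blast
qed

lemma few_rows_kernel:
  fixes Ls :: "'a::field vec list"
  assumes car: "set Ls \<subseteq> carrier_vec n" and len: "length Ls < n"
  shows "\<exists>v\<in>carrier_vec n. v \<noteq> 0\<^sub>v n \<and> (\<forall>r\<in>set Ls. r \<bullet> v = 0)"
proof -
  define c where "c = (\<lambda>i. if i < length Ls then Ls ! i else 0\<^sub>v n)"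
  define M where "M = mat\<^sub>r n n c"
  have c: "c \<in> {0..<n} \<rightarrow> carrier_vec n" unfolding c_def using car nth_mem by fastforce
  have "M = mat\<^sub>r n n (\<lambda>i. if i = n - 1 then 0\<^sub>v n else c i)"
    unfolding M_def c_def using len by (intro eq_matI) auto
  hence "det M = 0" using det_row_0[OF _ c, of "n-1"] len by simp
  moreover have M: "M \<in> carrier_mat n n" unfolding M_def by simp
  ultimately obtain v where v: "v \<in> carrier_vec n" "v \<noteq> 0\<^sub>v n" "M *\<^sub>v v = 0\<^sub>v n"
    using det_0_iff_vec_prod_zero_field[OF M] by blast
  have "r \<bullet> v = 0" if r: "r \<in> set Ls" for r
  proof -
    from r obtain i where i: "i < length Ls" "r = Ls ! i" by (auto simp: in_set_conv_nth)
    have "(M *\<^sub>v v) $ i = r \<bullet> v"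
    proof -
      have "dim_vec (Ls ! i) = n" using car i nth_mem by fastforce
      thus ?thesis using i len M unfolding M_def c_def by (subst index_mult_mat_vec) (auto simp: row_mat_of_row_fun)
    qed
    thus ?thesis using v(3) i len by simp
  qed
  thus ?thesis using v by blast
qed

lemma kernel_dim_le: "A \<in> carrier_mat nr nc \<Longrightarrow> kernel_dim A \<le> nc"
  unfolding kernel_dim_code by simp

lemma exists_eigenvalue:
  fixes A :: "'a::alg_closed_field mat"
  assumes A: "A \<in> carrier_mat n n" and n: "n > 0"
  shows "\<exists>lam. eigenvalue A lam"
proof -
  have "degree (char_poly A) = n" using degree_monic_char_poly[OF A] by simp
  then obtain lam where "poly (char_poly A) lam = 0" using alg_closed_imp_poly_has_root[of "char_poly A"] n by auto
  thus ?thesis using eigenvalue_root_char_poly[OF A] by blast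
qed

lemma max_eig_attained:
  fixes A :: "'a::alg_closed_field mat"
  assumes A: "A \<in> carrier_mat n n" and n: "n > 0"
  shows "\<exists>lam. eigenvalue A lam \<and> eigenspace_dim A lam = max_eigenspace_dim A"
proof -
  let ?S = "{eigenspace_dim A lam | lam. eigenvalue A lam}"
  have "?S \<subseteq> {..n}" unfolding eigenspace_dim_def using kernel_dim_le[OF char_matrix_closed[OF A]] by auto
  hence fin: "finite ?S" by (rule finite_subset) simp
  have ne: "?S \<noteq> {}" using exists_eigenvalue[OF A n] by blast
  have "Max ?S \<in> ?S" using Max_in[OF fin ne] .
  thus ?thesis unfolding max_eigenspace_dim_def by auto
qed

lemma conj_eigenspace_dim:
  fixes g h h' :: "'a::field mat"
  assumes g: "g \<in> carrier_mat n n" and h: "h \<in> carrier_mat n n" and h': "h' \<in> carrier_mat n n"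
    and hh: "h * h' = 1\<^sub>m n"
  shows "eigenspace_dim (h * g * h') lam = eigenspace_dim g lam"
proof -
  have h'h: "h' * h = 1\<^sub>m n" using mat_mult_left_right_inverse[OF h h' hh] .
  have "char_matrix (h * g * h') lam = h * g * h' + (- lam) \<cdot>\<^sub>m 1\<^sub>m n"
    unfolding char_matrix_def using g h h' by simp
  also have "\<dots> = h * char_matrix g lam * h'"
  proof -
    have "h * char_matrix g lam * h' = h * (g + (- lam) \<cdot>\<^sub>m 1\<^sub>m n) * h'"
      unfolding char_matrix_def using g by simp
    also have "\<dots> = (h * g + (- lam) \<cdot>\<^sub>m h) * h'"
      using g h by (simp add: mult_add_distrib_mat[of _ n n] mult_smult_distrib[OF h one_carrier_mat])
    also have "\<dots> = h * g * h' + (- lam) \<cdot>\<^sub>m (h * h')"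
      using g h h' by (simp add: add_mult_distrib_mat[of _ n n] mult_smult_assoc_mat[of _ n n])
    finally show ?thesis using hh by simp
  qed
  finally have eq: "char_matrix (h * g * h') lam = h * char_matrix g lam * h'" .
  have cg: "char_matrix g lam \<in> carrier_mat n n" using g by simp
  have wit: "similar_mat_wit (char_matrix (h * g * h') lam) (char_matrix g lam) h h'"
    unfolding similar_mat_wit_def Let_def eq using cg h h' hh h'h by auto
  have c1: "char_matrix (h * g * h') lam \<in> carrier_mat n n" using g h h' by simp
  show ?thesis unfolding eigenspace_dim_def kernel_dim_def
    using similar_mat_wit_kernel_dim[OF c1 wit] c1 cg by simp
qed

lemma common_eigvec:
  fixes x :: "nat \<Rightarrow> 'a::field mat" and lam :: "nat \<Rightarrow> 'a"
  assumes car: "\<forall>i<e. x i \<in> carrier_mat n n"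
    and sum: "(\<Sum>i<e. int (eigenspace_dim (x i) (lam i))) > int n * (int e - 1)"
  shows "\<exists>v\<in>carrier_vec n. v \<noteq> 0\<^sub>v n \<and> (\<forall>i<e. x i *\<^sub>v v = lam i \<cdot>\<^sub>v v)"
proof -
  let ?C = "\<lambda>i. char_matrix (x i) (lam i)"
  have "\<forall>i\<in>{..<e}. \<exists>Ls. set Ls \<subseteq> carrier_vec n \<and> length Ls = n - kernel_dim (?C i) \<and>
     (\<forall>y\<in>carrier_vec n. (\<forall>r\<in>set Ls. r \<bullet> y = 0) \<longrightarrow> ?C i *\<^sub>v y = 0\<^sub>v n)"
  proof
    fix i assume "i \<in> {..<e}"
    hence "?C i \<in> carrier_mat n n" using car by simp
    thus "\<exists>Ls. set Ls \<subseteq> carrier_vec n \<and> length Ls = n - kernel_dim (?C i) \<and>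
     (\<forall>y\<in>carrier_vec n. (\<forall>r\<in>set Ls. r \<bullet> y = 0) \<longrightarrow> ?C i *\<^sub>v y = 0\<^sub>v n)" by (rule reduce_rows)
  qed
  then obtain L where L: "\<And>i. i < e \<Longrightarrow> set (L i) \<subseteq> carrier_vec n \<and> length (L i) = n - kernel_dim (?C i) \<and>
     (\<forall>y\<in>carrier_vec n. (\<forall>r\<in>set (L i). r \<bullet> y = 0) \<longrightarrow> ?C i *\<^sub>v y = 0\<^sub>v n)"
    by (metis lessThan_iff)
  define Ls where "Ls = concat (map L [0..<e])"
  have carL: "set Ls \<subseteq> carrier_vec n"
  proof
    fix r assume "r \<in> set Ls"
    then obtain i where i: "i < e" "r \<in> set (L i)" unfolding Ls_def by auto
    thus "r \<in> carrier_vec n" using L[OF i(1)] by blast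
  qed
  have kle: "kernel_dim (?C i) \<le> n" if "i < e" for i using kernel_dim_le[OF char_matrix_closed[of "x i" n]] car that by simp
  have "length Ls = (\<Sum>i<e. length (L i))" unfolding Ls_def length_concat
    by (simp add: interv_sum_list_conv_sum_set_nat atLeast0LessThan)
  also have "\<dots> = (\<Sum>i<e. n - kernel_dim (?C i))" using L by (intro sum.cong) auto
  finally have len: "length Ls = (\<Sum>i<e. n - kernel_dim (?C i))" .
  have "int (length Ls) = (\<Sum>i<e. int n - int (kernel_dim (?C i)))"
    unfolding len of_nat_sum using kle by (intro sum.cong) (auto simp: of_nat_diff)
  also have "\<dots> = int n * int e - (\<Sum>i<e. int (eigenspace_dim (x i) (lam i)))"
    by (simp add: sum_subtractf eigenspace_dim_def mult.commute)
  finally have "int (length Ls) < int n" using sum by (simp add: algebra_simps)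
  hence "length Ls < n" by simp
  from few_rows_kernel[OF carL this] obtain v where v: "v \<in> carrier_vec n" "v \<noteq> 0\<^sub>v n"
    and z: "\<forall>r\<in>set Ls. r \<bullet> v = 0" by blast
  have "x i *\<^sub>v v = lam i \<cdot>\<^sub>v v" if i: "i < e" for i
  proof -
    have "\<forall>r\<in>set (L i). r \<bullet> v = 0" using z i unfolding Ls_def by auto
    hence "?C i *\<^sub>v v = 0\<^sub>v n" using L[OF i] v by blast
    hence "eigenvector (x i) v (lam i)" using eigenvector_char_matrix[of "x i" n] car i v by simp
    thus ?thesis unfolding eigenvector_def by simp
  qed
  thus ?thesis using v by blast
qed

lemma gen_subgroup_eig:
  fixes S :: "'a::field mat set" and v :: "'a vec"
  assumes S: "\<forall>X\<in>S. X \<in> carrier_mat n n \<and> (\<exists>c. X *\<^sub>v v = c \<cdot>\<^sub>v v)"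
    and v: "v \<in> carrier_vec n" "v \<noteq> 0\<^sub>v n"
    and A: "A \<in> gen_subgroup n S"
  shows "A \<in> carrier_mat n n \<and> (\<exists>c. A *\<^sub>v v = c \<cdot>\<^sub>v v)"
  using A
proof (induction rule: gen_subgroup.induct)
  case one
  show ?case using v by (intro conjI exI[of _ 1]) auto
next
  case (gen A)
  then show ?case using S by blast
next
  case (mult A B)
  from mult.IH obtain c d where A: "A \<in> carrier_mat n n" "A *\<^sub>v v = c \<cdot>\<^sub>v v"
    and B: "B \<in> carrier_mat n n" "B *\<^sub>v v = d \<cdot>\<^sub>v v" by blast
  have "(A * B) *\<^sub>v v = A *\<^sub>v (d \<cdot>\<^sub>v v)" using A B v by simp
  also have "\<dots> = d \<cdot>\<^sub>v (A *\<^sub>v v)" using A v by (simp add: mult_mat_vec)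
  also have "\<dots> = (d * c) \<cdot>\<^sub>v v" using A by (simp add: smult_smult_assoc)
  finally show ?case using A B by auto
next
  case (inv A B)
  from inv.IH obtain c where A: "A \<in> carrier_mat n n" "A *\<^sub>v v = c \<cdot>\<^sub>v v" by blast
  have BA: "B * A = 1\<^sub>m n" using mat_mult_left_right_inverse[OF A(1) inv.hyps(2) inv.hyps(3)] .
  have "v = (B * A) *\<^sub>v v" using BA v by simp
  also have "\<dots> = B *\<^sub>v (c \<cdot>\<^sub>v v)" using A inv.hyps(2) v by simp
  also have "\<dots> = c \<cdot>\<^sub>v (B *\<^sub>v v)" using inv.hyps(2) v by (simp add: mult_mat_vec)
  finally have vc: "v = c \<cdot>\<^sub>v (B *\<^sub>v v)" .
  have c0: "c \<noteq> 0"
  proof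
    assume "c = 0"
    hence "v = 0 \<cdot>\<^sub>v (B *\<^sub>v v)" using vc by simp
    also have "\<dots> = 0\<^sub>v n" using inv.hyps(2) by (intro eq_vecI) auto
    finally have "v = 0\<^sub>v n" .
    thus False using v by simp
  qed
  have "inverse c \<cdot>\<^sub>v v = (inverse c * c) \<cdot>\<^sub>v (B *\<^sub>v v)"
    by (subst vc) (simp add: smult_smult_assoc)
  also have "\<dots> = B *\<^sub>v v" using c0 by simp
  finally show ?case using inv.hyps(2) by metis
qed

lemma mpf_sum:
  assumes "finite T" "\<forall>j\<in>T. h j \<in> mat_poly_fun n"
  shows "(\<lambda>A. \<Sum>j\<in>T. h j A) \<in> mat_poly_fun n"
  using assms
proof (induction T rule: finite_induct)
  case empty
  then show ?case using mat_poly_fun.const[of 0 n] by simp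
next
  case (insert x F)
  have "(\<lambda>A. h x A + (\<Sum>j\<in>F. h j A)) \<in> mat_poly_fun n"
    by (rule mat_poly_fun.add) (use insert in auto)
  then show ?case using insert by simp
qed

lemma mpf_diff:
  assumes "f \<in> mat_poly_fun n" "g \<in> mat_poly_fun n"
  shows "(\<lambda>A. f A - g A) \<in> mat_poly_fun n"
proof -
  have "(\<lambda>A. (\<lambda>A. - 1) A * g A) \<in> mat_poly_fun n"
    by (rule mat_poly_fun.mult[OF mat_poly_fun.const assms(2)])
  hence "(\<lambda>A. f A + (\<lambda>A. (\<lambda>A. - 1) A * g A) A) \<in> mat_poly_fun n"
    by (rule mat_poly_fun.add[OF assms(1)])
  thus ?thesis by simp
qed

definition fpoly :: "nat \<Rightarrow> 'a::field vec \<Rightarrow> nat \<Rightarrow> nat \<Rightarrow> 'a mat \<Rightarrow> 'a" where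
  "fpoly n v r p = (\<lambda>A. (\<Sum>b\<in>{0..<n}. A $$ (r,b) * v $ b) * v $ p - (\<Sum>b\<in>{0..<n}. A $$ (p,b) * v $ b) * v $ r)"

lemma fpoly_mpf:
  assumes "r < n" "p < n"
  shows "fpoly n v r p \<in> mat_poly_fun n"
proof -
  have row: "(\<lambda>A. \<Sum>b\<in>{0..<n}. A $$ (q,b) * v $ b) \<in> mat_poly_fun n" if q: "q < n" for q
    by (rule mpf_sum) (auto intro!: mat_poly_fun.mult[OF mat_poly_fun.entry mat_poly_fun.const] q)
  show ?thesis unfolding fpoly_def
    by (rule mpf_diff; rule mat_poly_fun.mult[OF row mat_poly_fun.const]) (use assms in auto)
qed

lemma row_sum_eq:
  assumes "A \<in> carrier_mat n n" "v \<in> carrier_vec n" "q < n"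
  shows "(\<Sum>b\<in>{0..<n}. A $$ (q,b) * v $ b) = (A *\<^sub>v v) $ q"
  using assms by (simp add: scalar_prod_def)

lemma fpoly_val:
  assumes "A \<in> carrier_mat n n" "v \<in> carrier_vec n" "r < n" "p < n"
  shows "fpoly n v r p A = (A *\<^sub>v v) $ r * v $ p - (A *\<^sub>v v) $ p * v $ r"
  unfolding fpoly_def using row_sum_eq[OF assms(1,2)] assms(3,4) by simp

lemma addrow_mult_vec:
  fixes x :: "'a::comm_ring_1 vec"
  assumes x: "x \<in> carrier_vec n" and k: "k < n" and l: "l < n"
  shows "addrow_mat n a k l *\<^sub>v x = vec n (\<lambda>i. if i = k then x $ i + a * x $ l else x $ i)"
proof (rule eq_vecI)
  fix i assume "i < dim_vec (vec n (\<lambda>i. if i = k then x $ i + a * x $ l else x $ i))"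
  hence i: "i < n" by simp
  show "(addrow_mat n a k l *\<^sub>v x) $ i = vec n (\<lambda>i. if i = k then x $ i + a * x $ l else x $ i) $ i"
  proof (cases "i = k")
    case True
    then show ?thesis using i k l x
      by (simp add: row_addrow add_scalar_prod_distrib[of _ n] smult_scalar_prod_distrib[of _ n])
  next
    case False
    then show ?thesis using i k l x by (simp add: row_addrow)
  qed
qed simp

lemma symp_pres:
  fixes x y :: "'a::field vec"
  assumes n: "even n" and p: "p < n" and x: "x \<in> carrier_vec n" and y: "y \<in> carrier_vec n"
  shows "symp_form n (addrow_mat n a (n-1-p) p *\<^sub>v x) (addrow_mat n a (n-1-p) p *\<^sub>v y) = symp_form n x y"
proof -
  have k: "n - 1 - p < n" using p by simp
  show ?thesis
    unfolding addrow_mult_vec[OF x k p] addrow_mult_vec[OF y k p] symp_form_def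
  proof (intro sum.cong refl)
    fix i assume "i \<in> {..<n div 2}"
    hence i: "i < n div 2" by simp
    have i1: "i < n" "n - 1 - i < n" "n - 1 - i \<noteq> i" using i n by auto
    have e1: "(n - 1 - i = n - 1 - p) = (i = p)" using i p by auto
    have e2: "(i = n - 1 - p) = (n - 1 - i = p)" using i p by auto
    show "vec n (\<lambda>i. if i = n - 1 - p then x $ i + a * x $ p else x $ i) $ i *
          vec n (\<lambda>i. if i = n - 1 - p then y $ i + a * y $ p else y $ i) $ (n - 1 - i) -
          vec n (\<lambda>i. if i = n - 1 - p then x $ i + a * x $ p else x $ i) $ (n - 1 - i) *
          vec n (\<lambda>i. if i = n - 1 - p then y $ i + a * y $ p else y $ i) $ i =
          x $ i * y $ (n - 1 - i) - x $ (n - 1 - i) * y $ i"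
      using i1 e1 e2 by (auto simp: algebra_simps)
  qed
qed

lemma kernel_dim_two:
  fixes M :: "'a::field mat"
  assumes M: "M \<in> carrier_mat n n" and c: "c1 < n" "c2 < n" "c1 < c2"
    and K: "mat_kernel M = {x \<in> carrier_vec n. x $ c1 = 0 \<and> x $ c2 = 0}"
  shows "kernel_dim M = n - 2"
proof -
  define D :: "'a mat" where "D = mat n n (\<lambda>(i,j). if (i = 0 \<and> j = c1) \<or> (i = 1 \<and> j = c2) then 1 else 0)"
  have D: "D \<in> carrier_mat n n" unfolding D_def by simp
  have n2: "n \<ge> 2" using c by simp
  have Dv: "D *\<^sub>v x = vec n (\<lambda>i. if i = 0 then x $ c1 else if i = 1 then x $ c2 else 0)"
    if x: "x \<in> carrier_vec n" for x
  proof (rule eq_vecI)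
    fix i assume "i < dim_vec (vec n (\<lambda>i. if i = 0 then x $ c1 else if i = 1 then x $ c2 else 0))"
    hence i: "i < n" by simp
    have "(D *\<^sub>v x) $ i = (\<Sum>j\<in>{0..<n}. (if (i = 0 \<and> j = c1) \<or> (i = 1 \<and> j = c2) then 1 else 0) * x $ j)"
      using i x unfolding D_def by (simp add: scalar_prod_def)
    also have "\<dots> = (if i = 0 then x $ c1 else if i = 1 then x $ c2 else 0)"
    proof -
      consider "i = 0" | "i = 1" | "i \<noteq> 0 \<and> i \<noteq> 1" by blast
      then show ?thesis
      proof cases
        case 1
        hence "(\<Sum>j\<in>{0..<n}. (if (i = 0 \<and> j = c1) \<or> (i = 1 \<and> j = c2) then 1 else 0) * x $ j)
           = (\<Sum>j\<in>{0..<n}. if j = c1 then x $ j else 0)" by (intro sum.cong) auto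
        also have "\<dots> = x $ c1" using c by simp
        finally show ?thesis using 1 by simp
      next
        case 2
        hence "(\<Sum>j\<in>{0..<n}. (if (i = 0 \<and> j = c1) \<or> (i = 1 \<and> j = c2) then 1 else 0) * x $ j)
           = (\<Sum>j\<in>{0..<n}. if j = c2 then x $ j else 0)" by (intro sum.cong) auto
        also have "\<dots> = x $ c2" using c by simp
        finally show ?thesis using 2 by simp
      next
        case 3
        thus ?thesis by simp
      qed
    qed
    finally show "(D *\<^sub>v x) $ i = vec n (\<lambda>i. if i = 0 then x $ c1 else if i = 1 then x $ c2 else 0) $ i"
      using i by simp
  qed (simp add: D_def)
  have KD: "mat_kernel D = mat_kernel M"
  proof -
    have "mat_kernel D = {x \<in> carrier_vec n. D *\<^sub>v x = 0\<^sub>v n}" using mat_kernel[OF D] by simp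
    also have "\<dots> = {x \<in> carrier_vec n. x $ c1 = 0 \<and> x $ c2 = 0}"
    proof (intro Collect_cong conj_cong refl)
      fix x :: "'a vec" assume x: "x \<in> carrier_vec n"
      show "(D *\<^sub>v x = 0\<^sub>v n) = (x $ c1 = 0 \<and> x $ c2 = 0)"
      proof
        assume "D *\<^sub>v x = 0\<^sub>v n"
        hence "(D *\<^sub>v x) $ 0 = 0" "(D *\<^sub>v x) $ 1 = 0" using n2 by auto
        thus "x $ c1 = 0 \<and> x $ c2 = 0" using Dv[OF x] n2 by auto
      next
        assume "x $ c1 = 0 \<and> x $ c2 = 0"
        thus "D *\<^sub>v x = 0\<^sub>v n" unfolding Dv[OF x] by (intro eq_vecI) auto
      qed
    qed
    finally show ?thesis using K by simp
  qed
  define f where "f = (\<lambda>i::nat. if i = 0 then c1 else if i = 1 then c2 else n)"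
  have "pivot_fun D f n"
    unfolding pivot_fun_def Let_def using c n2 unfolding D_def f_def by auto
  hence ref: "row_echelon_form D" unfolding row_echelon_form_def using D by auto
  have rows: "{i. i < n \<and> row D i \<noteq> 0\<^sub>v n} = {0, 1}"
  proof (rule equalityI)
    show "{i. i < n \<and> row D i \<noteq> 0\<^sub>v n} \<subseteq> {0, 1}"
    proof
      fix i assume "i \<in> {i. i < n \<and> row D i \<noteq> 0\<^sub>v n}"
      hence i: "i < n" "row D i \<noteq> 0\<^sub>v n" by auto
      show "i \<in> {0, 1}"
      proof (rule ccontr)
        assume "i \<notin> {0, 1}"
        hence "row D i = 0\<^sub>v n" using i(1) unfolding D_def by (intro eq_vecI) auto
        thus False using i by simp
      qed
    qed
  next
    show "{0, 1} \<subseteq> {i. i < n \<and> row D i \<noteq> 0\<^sub>v n}"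
    proof
      fix i :: nat assume i: "i \<in> {0, 1}"
      have "row D i $ (if i = 0 then c1 else c2) = 1" using i c n2 unfolding D_def by auto
      hence "row D i \<noteq> 0\<^sub>v n" using c by auto
      thus "i \<in> {i. i < n \<and> row D i \<noteq> 0\<^sub>v n}" using i n2 by auto
    qed
  qed
  interpret K: kernel n n D by (unfold_locales, rule D)
  have "kernel_dim M = K.dim" unfolding kernel_dim_def using M KD by simp
  also have "\<dots> = n - 2" using find_base_vectors[OF ref D] rows by simp
  finally show ?thesis .
qed

lemma sum_pair_delta:
  fixes c :: "'a::comm_ring_1" and n \<alpha> :: nat
  assumes n: "even n" and al: "\<alpha> < n"
  shows "(\<Sum>j<n div 2. if j = \<alpha> \<or> j = n - 1 - \<alpha> then c else 0) = c"
proof -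
  have "(\<Sum>j<n div 2. if j = \<alpha> \<or> j = n - 1 - \<alpha> then c else 0) =
        (\<Sum>j<n div 2. if j = min \<alpha> (n - 1 - \<alpha>) then c else 0)"
    using n al by (intro sum.cong refl) auto
  also have "\<dots> = c"
  proof -
    have "min \<alpha> (n - 1 - \<alpha>) < n div 2" using n al by (auto simp: min_def elim!: evenE)
    thus ?thesis by simp
  qed
  finally show ?thesis .
qed

definition orth_even_W :: "nat \<Rightarrow> nat \<Rightarrow> nat \<Rightarrow> 'a::comm_ring_1 mat" where
  "orth_even_W n a b = addrow_mat n 1 a (n-1-b) * addrow_mat n (-1) b (n-1-a)"

context
  fixes n a b :: nat
  assumes n: "even n" and a: "a < n" and b: "b < n" and ab: "a \<noteq> b" "a \<noteq> n - 1 - b"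
begin

lemma orth_even_W_carrier: "orth_even_W n a b \<in> carrier_mat n n"
  unfolding orth_even_W_def by (rule mult_carrier_mat[OF addrow_mat_carrier addrow_mat_carrier])

lemma orth_even_W_det: "det (orth_even_W n a b :: 'a::comm_ring_1 mat) = 1"
proof -
  have ne: "a \<noteq> n - 1 - b" "b \<noteq> n - 1 - a" using a b ab by auto
  have d1: "det (addrow_mat n (1::'a) a (n-1-b)) = 1" by (rule det_addrow_mat[OF ne(1)])
  have d2: "det (addrow_mat n (-1::'a) b (n-1-a)) = 1" by (rule det_addrow_mat[OF ne(2)])
  have "det (orth_even_W n a b :: 'a mat) = det (addrow_mat n (1::'a) a (n-1-b)) * det (addrow_mat n (-1::'a) b (n-1-a))"
    unfolding orth_even_W_def by (rule det_mult[OF addrow_mat_carrier addrow_mat_carrier])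
  also have "\<dots> = 1" unfolding d1 d2 by simp
  finally show ?thesis .
qed

lemma orth_even_W_vec:
  fixes x :: "'a::comm_ring_1 vec"
  assumes x: "x \<in> carrier_vec n"
  shows "orth_even_W n a b *\<^sub>v x =
    vec n (\<lambda>j. if j = a then x $ j + x $ (n-1-b) else if j = b then x $ j - x $ (n-1-a) else x $ j)"
proof -
  have a': "n - 1 - a < n" and b': "n - 1 - b < n" "n - 1 - b \<noteq> b" using a b n by auto presburger
  let ?y = "vec n (\<lambda>i. if i = b then x $ i + (-1) * x $ (n-1-a) else x $ i)"
  have y: "?y \<in> carrier_vec n" by simp
  have "orth_even_W n a b *\<^sub>v x = addrow_mat n 1 a (n-1-b) *\<^sub>v (addrow_mat n (-1) b (n-1-a) *\<^sub>v x)"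
    unfolding orth_even_W_def by (rule assoc_mult_mat_vec[OF addrow_mat_carrier addrow_mat_carrier x])
  also have "\<dots> = addrow_mat n 1 a (n-1-b) *\<^sub>v ?y" using addrow_mult_vec[OF x b a'] by simp
  also have "\<dots> = vec n (\<lambda>i. if i = a then ?y $ i + 1 * ?y $ (n-1-b) else ?y $ i)"
    using addrow_mult_vec[OF y a b'(1)] by simp
  also have "\<dots> = vec n (\<lambda>j. if j = a then x $ j + x $ (n-1-b) else if j = b then x $ j - x $ (n-1-a) else x $ j)"
    using ab a b b' by (intro eq_vecI) auto
  finally show ?thesis .
qed

lemma orth_even_W_quad:
  fixes x :: "'a::field vec"
  assumes x: "x \<in> carrier_vec n"
  shows "quad_form n (orth_even_W n a b *\<^sub>v x) = quad_form n x"
proof -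
  let ?X = "orth_even_W n a b *\<^sub>v x"
  let ?a = "n - 1 - a" and ?b = "n - 1 - b"
  have pt: "?X $ j * ?X $ (n-1-j) = x $ j * x $ (n-1-j) + (if j = a \<or> j = ?a then x $ ?b * x $ ?a else 0)
       - (if j = b \<or> j = ?b then x $ ?a * x $ ?b else 0)" if j: "j < n div 2" for j
  proof -
    have j1: "j < n" "n - 1 - j < n" "n - 1 - j \<noteq> j" using j n by auto
    have e: "(n-1-j = a) = (j = ?a)" "(n-1-j = b) = (j = ?b)" "(n - 1 - (n - 1 - j)) = j"
      using j1 a b by auto
    have f: "?a \<noteq> a" "?b \<noteq> b" "?a \<noteq> b" "?b \<noteq> a" "?a \<noteq> ?b" using n a b ab by auto presburger+
    show ?thesis unfolding orth_even_W_vec[OF x] using j1 e f ab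
      by (auto simp: algebra_simps)
  qed
  have "(\<Sum>j<n div 2. ?X $ j * ?X $ (n-1-j)) =
     (\<Sum>j<n div 2. x $ j * x $ (n-1-j)) + (\<Sum>j<n div 2. if j = a \<or> j = ?a then x $ ?b * x $ ?a else 0)
       - (\<Sum>j<n div 2. if j = b \<or> j = ?b then x $ ?a * x $ ?b else 0)"
    using pt by (simp add: sum.distrib sum_subtractf)
  also have "\<dots> = (\<Sum>j<n div 2. x $ j * x $ (n-1-j))"
  proof -
    have s1: "(\<Sum>j<n div 2. if j = a \<or> j = ?a then x $ ?b * x $ ?a else 0) = x $ ?b * x $ ?a"
      by (rule sum_pair_delta[OF n a])
    have s2: "(\<Sum>j<n div 2. if j = b \<or> j = ?b then x $ ?a * x $ ?b else 0) = x $ ?a * x $ ?b"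
      by (rule sum_pair_delta[OF n b])
    show ?thesis unfolding s1 s2 by (simp add: mult.commute)
  qed
  finally show ?thesis unfolding quad_form_def using n by simp
qed

lemma orth_even_W_kernel:
  "kernel_dim (1\<^sub>m n - (orth_even_W n a b :: 'a::field mat)) = n - 2"
proof -
  let ?a = "n - 1 - a" and ?b = "n - 1 - b"
  let ?M = "1\<^sub>m n - (orth_even_W n a b :: 'a mat)"
  have M: "?M \<in> carrier_mat n n" by (rule minus_carrier_mat[OF orth_even_W_carrier])
  have f: "?a < n" "?b < n" "?a \<noteq> ?b" using a b ab by auto
  have Mx: "?M *\<^sub>v x = vec n (\<lambda>j. if j = a then - x $ ?b else if j = b then x $ ?a else 0)"
    if x: "x \<in> carrier_vec n" for x :: "'a vec"
  proof -
    have "?M *\<^sub>v x = x - orth_even_W n a b *\<^sub>v x"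
      using minus_mult_distrib_mat_vec[OF one_carrier_mat orth_even_W_carrier x] x by simp
    also have "\<dots> = vec n (\<lambda>j. if j = a then - x $ ?b else if j = b then x $ ?a else 0)"
      unfolding orth_even_W_vec[OF x] using x by (intro eq_vecI) auto
    finally show ?thesis .
  qed
  have K: "mat_kernel ?M = {x \<in> carrier_vec n. x $ min ?a ?b = 0 \<and> x $ max ?a ?b = 0}"
  proof -
    have "mat_kernel ?M = {x \<in> carrier_vec n. ?M *\<^sub>v x = 0\<^sub>v n}" using mat_kernel[OF M] by simp
    also have "\<dots> = {x \<in> carrier_vec n. x $ min ?a ?b = 0 \<and> x $ max ?a ?b = 0}"
    proof (intro Collect_cong conj_cong refl)
      fix x :: "'a vec" assume x: "x \<in> carrier_vec n"
      show "(?M *\<^sub>v x = 0\<^sub>v n) = (x $ min ?a ?b = 0 \<and> x $ max ?a ?b = 0)"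
      proof
        assume "?M *\<^sub>v x = 0\<^sub>v n"
        hence "(?M *\<^sub>v x) $ a = 0" "(?M *\<^sub>v x) $ b = 0" using a b by auto
        hence "x $ ?b = 0" "x $ ?a = 0" using Mx[OF x] a b ab by auto
        thus "x $ min ?a ?b = 0 \<and> x $ max ?a ?b = 0" by (auto simp: min_def max_def)
      next
        assume "x $ min ?a ?b = 0 \<and> x $ max ?a ?b = 0"
        hence "x $ ?b = 0" "x $ ?a = 0" by (auto simp: min_def max_def split: if_splits)
        thus "?M *\<^sub>v x = 0\<^sub>v n" unfolding Mx[OF x] by (intro eq_vecI) auto
      qed
    qed
    finally show ?thesis .
  qed
  show ?thesis by (rule kernel_dim_two[OF M _ _ _ K]) (use f in auto)
qed

end

lemma sum_pair_delta2:
  fixes c :: "'a::comm_ring_1" and n \<alpha> :: nat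
  assumes al: "\<alpha> < n" and ne: "\<alpha> \<noteq> n - 1 - \<alpha>"
  shows "(\<Sum>j<n div 2. if j = \<alpha> \<or> j = n - 1 - \<alpha> then c else 0) = c"
proof -
  have "(\<Sum>j<n div 2. if j = \<alpha> \<or> j = n - 1 - \<alpha> then c else 0) =
        (\<Sum>j<n div 2. if j = min \<alpha> (n - 1 - \<alpha>) then c else 0)"
    using al ne by (intro sum.cong refl) (auto simp: min_def)
  also have "\<dots> = c"
  proof -
    have "min \<alpha> (n - 1 - \<alpha>) < n div 2" using al ne by (auto simp: min_def)
    thus ?thesis by simp
  qed
  finally show ?thesis .
qed

definition orth_odd_W :: "nat \<Rightarrow> nat \<Rightarrow> 'a::comm_ring_1 mat" where
  "orth_odd_W n i = addrow_mat n 1 (n div 2) (n-1-i) * addrow_mat n (-2) i (n div 2) * addrow_mat n (-1) i (n-1-i)"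

context
  fixes n i :: nat
  assumes n: "odd n" and i: "i < n" and im: "i \<noteq> n div 2"
begin

lemma orth_odd_facts: "n div 2 < n" "n - 1 - i < n" "n - 1 - i \<noteq> n div 2" "i \<noteq> n - 1 - i"
  using n i im by (auto elim!: oddE)

lemma orth_odd_W_carrier: "orth_odd_W n i \<in> carrier_mat n n"
  unfolding orth_odd_W_def
  by (rule mult_carrier_mat[OF mult_carrier_mat[OF addrow_mat_carrier addrow_mat_carrier] addrow_mat_carrier])

lemma orth_odd_W_det: "det (orth_odd_W n i :: 'a::comm_ring_1 mat) = 1"
proof -
  note f = orth_odd_facts
  have d1: "det (addrow_mat n (1::'a) (n div 2) (n-1-i)) = 1" by (rule det_addrow_mat) (use f in auto)
  have d2: "det (addrow_mat n (-2::'a) i (n div 2)) = 1" by (rule det_addrow_mat[OF im])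
  have d3: "det (addrow_mat n (-1::'a) i (n-1-i)) = 1" by (rule det_addrow_mat[OF f(4)])
  have "det (orth_odd_W n i :: 'a mat) = det (addrow_mat n (1::'a) (n div 2) (n-1-i) * addrow_mat n (-2) i (n div 2))
       * det (addrow_mat n (-1::'a) i (n-1-i))"
    unfolding orth_odd_W_def
    by (rule det_mult[OF mult_carrier_mat[OF addrow_mat_carrier addrow_mat_carrier] addrow_mat_carrier])
  also have "\<dots> = 1"
    unfolding det_mult[OF addrow_mat_carrier addrow_mat_carrier] d1 d2 d3 by simp
  finally show ?thesis .
qed

lemma orth_odd_W_vec:
  fixes x :: "'a::comm_ring_1 vec"
  assumes x: "x \<in> carrier_vec n"
  shows "orth_odd_W n i *\<^sub>v x =
    vec n (\<lambda>j. if j = i then x $ j - x $ (n-1-i) - 2 * x $ (n div 2)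
      else if j = n div 2 then x $ j + x $ (n-1-i) else x $ j)"
proof -
  note f = orth_odd_facts
  let ?m = "n div 2" and ?p = "n - 1 - i"
  let ?y = "vec n (\<lambda>j. if j = i then x $ j + (-1) * x $ ?p else x $ j)"
  let ?z = "vec n (\<lambda>j. if j = i then ?y $ j + (-2) * ?y $ ?m else ?y $ j)"
  have y: "?y \<in> carrier_vec n" and z: "?z \<in> carrier_vec n" by simp_all
  have "orth_odd_W n i *\<^sub>v x = addrow_mat n 1 ?m ?p *\<^sub>v (addrow_mat n (-2) i ?m *\<^sub>v (addrow_mat n (-1) i ?p *\<^sub>v x))"
  proof -
    have c: "addrow_mat n (-1) i ?p *\<^sub>v x \<in> carrier_vec n" by (rule mult_mat_vec_carrier[OF addrow_mat_carrier x])
    show ?thesis unfolding orth_odd_W_def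
      by (subst assoc_mult_mat_vec[OF mult_carrier_mat[OF addrow_mat_carrier addrow_mat_carrier] addrow_mat_carrier x],
          subst assoc_mult_mat_vec[OF addrow_mat_carrier addrow_mat_carrier c], rule refl)
  qed
  also have "addrow_mat n (-1) i ?p *\<^sub>v x = ?y" using addrow_mult_vec[OF x i f(2)] by simp
  also have "addrow_mat n (-2) i ?m *\<^sub>v ?y = ?z" using addrow_mult_vec[OF y i f(1)] by simp
  also have "addrow_mat n 1 ?m ?p *\<^sub>v ?z = vec n (\<lambda>j. if j = ?m then ?z $ j + 1 * ?z $ ?p else ?z $ j)"
    using addrow_mult_vec[OF z f(1) f(2)] by simp
  also have "\<dots> = vec n (\<lambda>j. if j = i then x $ j - x $ ?p - 2 * x $ ?m
      else if j = ?m then x $ j + x $ ?p else x $ j)"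
    using f i im by (intro eq_vecI) (auto simp: algebra_simps)
  finally show ?thesis .
qed

lemma orth_odd_W_quad:
  fixes x :: "'a::field vec"
  assumes x: "x \<in> carrier_vec n"
  shows "quad_form n (orth_odd_W n i *\<^sub>v x) = quad_form n x"
proof -
  note f = orth_odd_facts
  let ?X = "orth_odd_W n i *\<^sub>v x"
  let ?m = "n div 2" and ?p = "n - 1 - i"
  have pt: "?X $ j * ?X $ (n-1-j) = x $ j * x $ (n-1-j) + (if j = i \<or> j = ?p then (- x $ ?p - 2 * x $ ?m) * x $ ?p else 0)"
    if j: "j < n div 2" for j
  proof -
    have j1: "j < n" "n - 1 - j < n" "n - 1 - j \<noteq> j" "j \<noteq> ?m" "n - 1 - j \<noteq> ?m" using j n by (auto elim!: oddE)
    have e: "(n-1-j = i) = (j = ?p)" "(n-1-j = ?p) = (j = i)" using j1 i by auto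
    show ?thesis unfolding orth_odd_W_vec[OF x] using j1 e f
      by (auto simp: algebra_simps)
  qed
  have "(\<Sum>j<n div 2. ?X $ j * ?X $ (n-1-j)) =
     (\<Sum>j<n div 2. x $ j * x $ (n-1-j)) + (\<Sum>j<n div 2. if j = i \<or> j = ?p then (- x $ ?p - 2 * x $ ?m) * x $ ?p else 0)"
    using pt by (simp add: sum.distrib)
  also have "(\<Sum>j<n div 2. if j = i \<or> j = ?p then (- x $ ?p - 2 * x $ ?m) * x $ ?p else 0) = (- x $ ?p - 2 * x $ ?m) * x $ ?p"
    by (rule sum_pair_delta2[OF i f(4)])
  finally have s: "(\<Sum>j<n div 2. ?X $ j * ?X $ (n-1-j)) =
     (\<Sum>j<n div 2. x $ j * x $ (n-1-j)) + (- x $ ?p - 2 * x $ ?m) * x $ ?p" .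
  have mid: "?X $ ?m = x $ ?m + x $ ?p" unfolding orth_odd_W_vec[OF x] using f im by simp
  show ?thesis unfolding quad_form_def s mid using n by (simp add: algebra_simps power2_eq_square)
qed

end

lemma witness:
  fixes v :: "'a::field vec"
  assumes cd: "classical_data t n TYPE('a)" and v: "v \<in> carrier_vec n" "v \<noteq> 0\<^sub>v n"
  shows "\<exists>W\<in>classical_group t n. \<exists>r<n. \<exists>p<n. v $ p \<noteq> 0 \<and> (W *\<^sub>v v) $ p = v $ p \<and> (W *\<^sub>v v) $ r \<noteq> v $ r"
proof -
  obtain p where p: "p < n" "v $ p \<noteq> 0"
  proof -
    have "\<not> (\<forall>i<n. v $ i = 0)"
    proof
      assume "\<forall>i<n. v $ i = 0"
      hence "v = 0\<^sub>v n" using v(1) by (intro eq_vecI) auto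
      thus False using v(2) by simp
    qed
    thus ?thesis using that by blast
  qed
  show ?thesis
  proof (cases t)
    case Linear
    have n: "n \<ge> 2" using cd Linear unfolding classical_data_def by simp
    define k where "k = (if p = 0 then 1 else (0::nat))"
    have k: "k < n" "k \<noteq> p" unfolding k_def using n by auto
    define W :: "'a mat" where "W = addrow_mat n 1 k p"
    have WG: "W \<in> classical_group t n" unfolding Linear classical_group_def W_def
      using det_addrow_mat[OF k(2)] by simp
    have Wv: "W *\<^sub>v v = vec n (\<lambda>i. if i = k then v $ i + 1 * v $ p else v $ i)"
      unfolding W_def by (rule addrow_mult_vec[OF v(1) k(1) p(1)])
    show ?thesis
      by (rule bexI[OF _ WG], rule exI[of _ k], rule conjI[OF k(1)], rule exI[of _ p])
        (use p k Wv in auto)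
  next
    case Symplectic
    have n: "n \<ge> 2" "even n" using cd Symplectic unfolding classical_data_def by simp_all
    define k where "k = n - 1 - p"
    have k: "k < n" "k \<noteq> p" unfolding k_def using n p by (simp, presburger)
    define W :: "'a mat" where "W = addrow_mat n 1 k p"
    have d: "det W = 1" unfolding W_def by (rule det_addrow_mat[OF k(2)])
    have s: "\<forall>x\<in>carrier_vec n. \<forall>y\<in>carrier_vec n. symp_form n (W *\<^sub>v x) (W *\<^sub>v y) = symp_form n x y"
      unfolding W_def k_def using symp_pres[OF n(2) p(1)] by blast
    have Wc: "W \<in> carrier_mat n n" unfolding W_def by simp
    have WG: "W \<in> classical_group t n" unfolding Symplectic classical_group_def
      using d s Wc by simp
    have Wv: "W *\<^sub>v v = vec n (\<lambda>i. if i = k then v $ i + 1 * v $ p else v $ i)"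
      unfolding W_def by (rule addrow_mult_vec[OF v(1) k(1) p(1)])
    show ?thesis
      by (rule bexI[OF _ WG], rule exI[of _ k], rule conjI[OF k(1)], rule exI[of _ p])
        (use p k Wv in auto)
  next
    case Orthogonal
    have n: "n \<ge> 3" "odd n \<longrightarrow> (2::'a) \<noteq> 0" using cd Orthogonal unfolding classical_data_def by simp_all
    show ?thesis
    proof (cases "even n")
      case True
      have n4: "n \<ge> 4" using n(1) True by presburger
      define a where "a = (if p = 0 \<or> p = n - 1 then 1 else (0::nat))"
      define b where "b = n - 1 - p"
      have ab: "a < n" "b < n" "a \<noteq> b" "a \<noteq> n - 1 - b" "n - 1 - b = p" "p \<noteq> a" "p \<noteq> b"
      proof -
        have e: "n - 1 - p \<noteq> p" using True p(1) by presburger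
        show "a < n" "b < n" "a \<noteq> b" "a \<noteq> n - 1 - b" "n - 1 - b = p" "p \<noteq> a" "p \<noteq> b"
          unfolding a_def b_def using n4 p(1) e by auto
      qed
      define W :: "'a mat" where "W = orth_even_W n a b"
      have Wc: "W \<in> carrier_mat n n" unfolding W_def by (rule orth_even_W_carrier[OF True ab(1-4)])
      have kk: "kernel_dim (1\<^sub>m n - (orth_even_W n a b :: 'a mat)) = n - 2"
        by (rule orth_even_W_kernel[OF True ab(1-4)])
      have rk: "rank_one_minus n W = 2" unfolding rank_one_minus_def W_def kk using n4 by simp
      have d: "det W = 1" unfolding W_def by (rule orth_even_W_det[OF True ab(1-4)])
      have qf: "\<forall>x\<in>carrier_vec n. quad_form n (W *\<^sub>v x) = quad_form n x"
        unfolding W_def by (intro ballI orth_even_W_quad[OF True ab(1-4)])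
      have WG: "W \<in> classical_group t n" unfolding Orthogonal classical_group_def
        using Wc rk d qf by simp
      have Wv: "W *\<^sub>v v = vec n (\<lambda>j. if j = a then v $ j + v $ (n-1-b) else if j = b then v $ j - v $ (n-1-a) else v $ j)"
        unfolding W_def by (rule orth_even_W_vec[OF True ab(1-4) v(1)])
      show ?thesis
        by (rule bexI[OF _ WG], rule exI[of _ a], rule conjI[OF ab(1)], rule exI[of _ p])
          (use p ab Wv in auto)
    next
      case False
      have two: "(2::'a) \<noteq> 0" using n(2) False by simp
      let ?m = "n div 2"
      have m: "?m < n" "0 \<noteq> ?m" "n - 1 \<noteq> ?m" using n(1) False by (auto elim!: oddE)
      show ?thesis
      proof (cases "\<exists>q<n. q \<noteq> ?m \<and> v $ q \<noteq> 0")
        case True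
        then obtain q where q: "q < n" "q \<noteq> ?m" "v $ q \<noteq> 0" by blast
        define i where "i = n - 1 - q"
        have i: "i < n" "i \<noteq> ?m" "n - 1 - i = q" "q \<noteq> i" unfolding i_def using q False by (auto elim!: oddE)
        define W :: "'a mat" where "W = orth_odd_W n i"
        have Wc: "W \<in> carrier_mat n n" unfolding W_def by (rule orth_odd_W_carrier[OF False i(1,2)])
        have d: "det W = 1" unfolding W_def by (rule orth_odd_W_det[OF False i(1,2)])
        have qf: "\<forall>x\<in>carrier_vec n. quad_form n (W *\<^sub>v x) = quad_form n x"
          unfolding W_def by (intro ballI orth_odd_W_quad[OF False i(1,2)])
        have WG: "W \<in> classical_group t n" unfolding Orthogonal classical_group_def
          using Wc two d qf by simp
        have Wv: "W *\<^sub>v v = vec n (\<lambda>j. if j = i then v $ j - v $ (n-1-i) - 2 * v $ ?m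
            else if j = ?m then v $ j + v $ (n-1-i) else v $ j)"
          unfolding W_def by (rule orth_odd_W_vec[OF False i(1,2) v(1)])
        have r1: "(W *\<^sub>v v) $ ?m \<noteq> v $ ?m" unfolding Wv i(3) using m q i by simp
        have r2: "(W *\<^sub>v v) $ q = v $ q" unfolding Wv i(3) using q i by simp
        show ?thesis using WG m q r1 r2 by blast
      next
        case False2: False
        have z: "v $ j = 0" if "j < n" "j \<noteq> ?m" for j using False2 that by blast
        have vm: "v $ ?m \<noteq> 0" using p z by (cases "p = ?m") auto
        have i: "0 < n" "(0::nat) \<noteq> ?m" using m by auto
        define W :: "'a mat" where "W = orth_odd_W n 0"
        have Wc: "W \<in> carrier_mat n n" unfolding W_def by (rule orth_odd_W_carrier[OF False i(1,2)])
        have d: "det W = 1" unfolding W_def by (rule orth_odd_W_det[OF False i(1,2)])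
        have qf: "\<forall>x\<in>carrier_vec n. quad_form n (W *\<^sub>v x) = quad_form n x"
          unfolding W_def by (intro ballI orth_odd_W_quad[OF False i(1,2)])
        have WG: "W \<in> classical_group t n" unfolding Orthogonal classical_group_def
          using Wc two d qf by simp
        have Wv: "W *\<^sub>v v = vec n (\<lambda>j. if j = 0 then v $ j - v $ (n-1-0) - 2 * v $ ?m
            else if j = ?m then v $ j + v $ (n-1-0) else v $ j)"
          unfolding W_def by (rule orth_odd_W_vec[OF False i(1,2) v(1)])
        have v0: "v $ 0 = 0" "v $ (n - 1) = 0" using z m by auto
        have "(W *\<^sub>v v) $ 0 = - 2 * v $ ?m" unfolding Wv using i v0 by simp
        hence r: "(W *\<^sub>v v) $ 0 \<noteq> v $ 0" using two vm v0 by simp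
        have "(W *\<^sub>v v) $ ?m = v $ ?m" unfolding Wv using i v0 m by simp
        thus ?thesis using WG r vm m i by blast
      qed
    qed
  qed
qed

lemma classical_group_carrier: "classical_group t n \<subseteq> carrier_mat n n"
  unfolding classical_group_def by (cases t) auto

theorem lemma3p6:
  fixes t :: classical_type and n e :: nat
    and g :: "nat \<Rightarrow> 'a::alg_closed_field mat"
    and x :: "nat \<Rightarrow> 'a mat"
  assumes "classical_data t n TYPE('a)"
    and "\<forall>i<e. g i \<in> classical_group t n"
    and "\<forall>i<e. x i \<in> conj_class n (classical_group t n) (g i)"
    and "(\<Sum>i<e. int (max_eigenspace_dim (g i))) > int n * (int e - 1)"
  shows "\<not> zariski_dense_in n (gen_subgroup n (x ` {..<e})) (classical_group t n)"
proof
  let ?G = "classical_group t n :: 'a mat set"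
  let ?H = "gen_subgroup n (x ` {..<e})"
  assume dense: "zariski_dense_in n ?H ?G"
  have n: "n > 0" using assms(1) unfolding classical_data_def by (cases t) auto
  have Gc: "?G \<subseteq> carrier_mat n n" by (rule classical_group_carrier)
  have gc: "g i \<in> carrier_mat n n" if "i < e" for i using assms(2) that Gc by blast
  have xconj: "\<exists>h h'. h \<in> carrier_mat n n \<and> h' \<in> carrier_mat n n \<and> h * h' = 1\<^sub>m n \<and> x i = h * g i * h'"
    if i: "i < e" for i
    using assms(3) i Gc unfolding conj_class_def by blast
  have xc: "x i \<in> carrier_mat n n" if i: "i < e" for i
    using xconj[OF i] gc[OF i] by auto
  have "\<forall>i\<in>{..<e}. \<exists>lam. eigenspace_dim (x i) lam = max_eigenspace_dim (g i)"
  proof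
    fix i assume "i \<in> {..<e}"
    hence i: "i < e" by simp
    obtain lam where lam: "eigenspace_dim (g i) lam = max_eigenspace_dim (g i)"
      using max_eig_attained[OF gc[OF i] n] by blast
    obtain h h' where hh: "h \<in> carrier_mat n n" "h' \<in> carrier_mat n n" "h * h' = 1\<^sub>m n" "x i = h * g i * h'"
      using xconj[OF i] by blast
    have "eigenspace_dim (x i) lam = eigenspace_dim (g i) lam"
      using conj_eigenspace_dim[OF gc[OF i] hh(1,2,3)] hh(4) by simp
    thus "\<exists>lam. eigenspace_dim (x i) lam = max_eigenspace_dim (g i)" using lam by auto
  qed
  then obtain lam where lam: "\<And>i. i < e \<Longrightarrow> eigenspace_dim (x i) (lam i) = max_eigenspace_dim (g i)"
    by (metis lessThan_iff)
  have "(\<Sum>i<e. int (eigenspace_dim (x i) (lam i))) = (\<Sum>i<e. int (max_eigenspace_dim (g i)))"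
    using lam by (intro sum.cong) auto
  hence "(\<Sum>i<e. int (eigenspace_dim (x i) (lam i))) > int n * (int e - 1)" using assms(4) by simp
  from common_eigvec[OF _ this] xc obtain v where v: "v \<in> carrier_vec n" "v \<noteq> 0\<^sub>v n"
    and ev: "\<forall>i<e. x i *\<^sub>v v = lam i \<cdot>\<^sub>v v" by blast
  have Hs: "\<forall>X\<in>x ` {..<e}. X \<in> carrier_mat n n \<and> (\<exists>c. X *\<^sub>v v = c \<cdot>\<^sub>v v)"
    using xc ev by auto
  obtain W r p where W: "W \<in> ?G" and r: "r < n" and p: "p < n" and vp: "v $ p \<noteq> 0"
    and Wp: "(W *\<^sub>v v) $ p = v $ p" and Wr: "(W *\<^sub>v v) $ r \<noteq> v $ r"
    using witness[OF assms(1) v] by blast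
  have vanish: "\<forall>A\<in>?H. fpoly n v r p A = 0"
  proof
    fix A assume A: "A \<in> ?H"
    from gen_subgroup_eig[OF Hs v A] obtain c where Ac: "A \<in> carrier_mat n n" "A *\<^sub>v v = c \<cdot>\<^sub>v v" by blast
    show "fpoly n v r p A = 0" unfolding fpoly_val[OF Ac(1) v(1) r p] Ac(2) using v r p by simp
  qed
  have "fpoly n v r p W = 0" using dense fpoly_mpf[OF r p] vanish W unfolding zariski_dense_in_def by blast
  moreover have "fpoly n v r p W = v $ p * ((W *\<^sub>v v) $ r - v $ r)"
  proof -
    have Wc: "W \<in> carrier_mat n n" using W Gc by blast
    show ?thesis unfolding fpoly_val[OF Wc v(1) r p] Wp by (simp add: algebra_simps)
  qed
  ultimately show False using vp Wr by simp
qed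

end
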